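(* Let $\mathcal{H}=(\mathcal{T},\mathsf{SO})$ be a history and let $\mathcal{G}=(\mathcal{V},\mathcal{E},(\mathcal{C}^{\mathsf{WW}},\mathcal{C}^{\mathsf{WR}}))$ be the hyper-polygraph of $\mathcal{H}$. Then $\mathcal{H}$ satisfies Serializability if and only if $\mathcal{H}$ satisfies $\textsc{Int}$ and there exists an acyclic directed labeled graph that is compatible with $\mathcal{G}$.
   Context: Fix a set of keys $\mathsf{Key}$ and a set of values $\mathsf{Val}$. An operation is a read $\mathsf{R}(x,v)$ or a write $\mathsf{W}(x,v)$ with $x\in\mathsf{Key}$, $v\in\mathsf{Val}$ (each operation carries a unique identifier). A transaction is a pair $(O,\mathsf{po})$ where $O$ is a finite non-empty set of operations and $\mathsf{po}$ (program order) is a strict total order on $O$. A history is a pair $\mathcal{H}=(\mathcal{T},\mathsf{SO})$ where $\mathcal{T}$ is a set of transactions with pairwise disjoint operation sets and $\mathsf{SO}\subseteq\mathcal{T}\times\mathcal{T}$ (session order) is a union of strict total orders on pairwise disjoint subsets of $\mathcal{T}$. Every history contains a special transaction $T_\bot$ that writes the initial value of every key and precedes every other transaction in $\mathsf{SO}$. Notation: $T\vdash \mathsf{W}(x,v)$ means $T$ writes to $x$ and $v$ is the value of its $\mathsf{po}$-last write to $x$; $T\vdash\mathsf{R}(x,v)$ means $T$ reads $x$ before (in $\mathsf{po}$) any write of $T$ to $x$, and $v$ is the value returned by the first such read. $\mathsf{WriteTx}_x=\{T\mid T\vdash\mathsf{W}(x,\_)\}$, where $\_$ denotes an existentially quantified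 value. $\mathcal{H}$ satisfies $\textsc{Int}$ (internal consistency) if in every transaction, every read of a key $x$ that is $\mathsf{po}$-preceded by some operation on $x$ returns the value of the $\mathsf{po}$-latest preceding operation on $x$ (the value written, if a write; the value returned, if a read). $\mathcal{H}$ satisfies Serializability if $\mathcal{H}\models\textsc{Int}$ and there is a strict total order $\prec$ on $\mathcal{T}$ containing $\mathsf{SO}$ such that for every $S\in\mathcal{T}$, key $x$ and value $v$ with $S\vdash\mathsf{R}(x,v)$, the $\prec$-greatest transaction $T\prec S$ with $T\in\mathsf{WriteTx}_x$ satisfies $T\vdash\mathsf{W}(x,v)$. Hyper-polygraph of $\mathcal{H}$: $\mathcal{G}=(\mathcal{V},\mathcal{E},(\mathcal{C}^{\mathsf{WW}},\mathcal{C}^{\mathsf{WR}}))$ where $\mathcal{V}=\mathcal{T}$; edges are tuples $(T,S,\mathsf{t},x)$, written $T\xrightarrow{\mathsf{t}(x)}S$, with type $\mathsf{t}\in\{\mathsf{SO},\mathsf{WR},\mathsf{WW},\mathsf{RW}\}$ and key $x$ (irrelevant for $\mathsf{SO}$); the known edge set $\mathcal{E}$ consists of $T\xrightarrow{\mathsf{SO}}S$ for all $(T,S)\in\mathsf{SO}$, and $T\xrightarrow{\mathsf{WR}(x)}S$ whenever $S\vdash\mathsf{R}(x,v)$ and $T$ is the unique transaction with $T\vdash\mathsf{W}(x,v)$; $\mathcal{C}^{\mathsf{WW}}=\{\{T\xrightarrow{\mathsf{WW}(x)}S,\ S\xrightarrow{\mathsf{WW}(x)}T\}\mid x\in\mathsf{Key},\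 T,S\in\mathsf{WriteTx}_x,\ T\neq S\}$; $\mathcal{C}^{\mathsf{WR}}=\{\{T_i\xrightarrow{\mathsf{WR}(x)}S\mid T_i\vdash\mathsf{W}(x,v)\}\mid S\vdash\mathsf{R}(x,v)\}$. A directed labeled graph $\mathcal{G}'=(\mathcal{V}',\mathcal{E}')$ is compatible with $\mathcal{G}$ if $\mathcal{V}'=\mathcal{V}$; $\mathcal{E}'\supseteq\mathcal{E}$; for all keys $x$ and all $T,T',S\in\mathcal{V}$ with $T\neq S$, if $T'\xrightarrow{\mathsf{WR}(x)}T\in\mathcal{E}'$ and $T'\xrightarrow{\mathsf{WW}(x)}S\in\mathcal{E}'$ then $T\xrightarrow{\mathsf{RW}(x)}S\in\mathcal{E}'$; and $|\mathcal{E}'\cap C|=1$ for every $C\in\mathcal{C}^{\mathsf{WW}}\cup\mathcal{C}^{\mathsf{WR}}$. A labeled graph is acyclic if the underlying relation on vertices (ignoring labels and keys) has no directed cycle, including self-loops. *)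

theory Defs
  imports Main
begin

datatype okind = Rd | Wr

text \<open>An operation: unique identifier, kind (read/write), key, value.
  Keys are the elements of type 'k (the set Key), values those of type 'v (the set Val).\<close>
datatype ('k, 'v) operation = Op (oid: nat) (okind: okind) (okey: 'k) (oval: 'v)

type_synonym ('k, 'v) txn =
  "('k, 'v) operation set \<times> (('k, 'v) operation \<times> ('k, 'v) operation) set"

definition strict_total_on :: "'a set \<Rightarrow> ('a \<times> 'a) set \<Rightarrow> bool" where
  "strict_total_on A r \<longleftrightarrow> r \<subseteq> A \<times> A \<and> irrefl r \<and> trans r \<and>
     (\<forall>a\<in>A. \<forall>b\<in>A. a \<noteq> b \<longrightarrow> (a, b) \<in> r \<or> (b, a) \<in> r)"

definition is_transaction :: "('k, 'v) txn \<Rightarrow> bool" where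
  "is_transaction T \<longleftrightarrow> finite (fst T) \<and> fst T \<noteq> {} \<and> strict_total_on (fst T) (snd T)"

definition writes :: "('k, 'v) txn \<Rightarrow> 'k \<Rightarrow> 'v \<Rightarrow> bool" where
  "writes T x v \<longleftrightarrow> (\<exists>w\<in>fst T. okind w = Wr \<and> okey w = x \<and> oval w = v \<and>
     (\<forall>w'\<in>fst T. okind w' = Wr \<and> okey w' = x \<and> w' \<noteq> w \<longrightarrow> (w', w) \<in> snd T))"

definition reads :: "('k, 'v) txn \<Rightarrow> 'k \<Rightarrow> 'v \<Rightarrow> bool" where
  "reads T x v \<longleftrightarrow> (\<exists>r\<in>fst T. okind r = Rd \<and> okey r = x \<and> oval r = v \<and>
     (\<forall>w\<in>fst T. okind w = Wr \<and> okey w = x \<longrightarrow> (r, w) \<in> snd T) \<and>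
     (\<forall>r'\<in>fst T. okind r' = Rd \<and> okey r' = x \<and> r' \<noteq> r \<longrightarrow> (r, r') \<in> snd T))"

definition WriteTx :: "('k, 'v) txn set \<Rightarrow> 'k \<Rightarrow> ('k, 'v) txn set" where
  "WriteTx \<T> x = {T \<in> \<T>. \<exists>v. writes T x v}"

text \<open>SO is the union of strict total orders on pairwise disjoint subsets (the sessions)
  of the non-initial transactions, together with the edges from Tb to every other
  transaction.\<close>
definition is_history ::
  "('k, 'v) txn set \<Rightarrow> (('k, 'v) txn \<times> ('k, 'v) txn) set \<Rightarrow> ('k, 'v) txn \<Rightarrow> bool" where
  "is_history \<T> SO Tb \<longleftrightarrow>
     finite \<T> \<and> (\<forall>T\<in>\<T>. is_transaction T) \<and>
     (\<forall>T\<in>\<T>. \<forall>S\<in>\<T>. T \<noteq> S \<longrightarrow> fst T \<inter> fst S = {}) \<and>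
     Tb \<in> \<T> \<and> (\<forall>x. \<exists>v. writes Tb x v) \<and>
     (\<exists>P R. (\<forall>A\<in>P. A \<subseteq> \<T> - {Tb}) \<and>
            (\<forall>A\<in>P. \<forall>B\<in>P. A \<noteq> B \<longrightarrow> A \<inter> B = {}) \<and>
            (\<forall>A\<in>P. strict_total_on A (R A)) \<and>
            SO = (\<Union>A\<in>P. R A) \<union> {(Tb, T) | T. T \<in> \<T> \<and> T \<noteq> Tb})"

definition Int_consistent :: "('k, 'v) txn set \<Rightarrow> bool" where
  "Int_consistent \<T> \<longleftrightarrow>
     (\<forall>T\<in>\<T>. \<forall>p\<in>fst T. \<forall>p'\<in>fst T.
        okind p = Rd \<and> okey p' = okey p \<and> (p', p) \<in> snd T \<and>
        (\<forall>p''\<in>fst T. okey p'' = okey p \<and> (p'', p) \<in> snd T \<longrightarrow> p'' = p' \<or> (p'', p') \<in> snd T)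
        \<longrightarrow> oval p = oval p')"

definition serializable ::
  "('k, 'v) txn set \<Rightarrow> (('k, 'v) txn \<times> ('k, 'v) txn) set \<Rightarrow> bool" where
  "serializable \<T> SO \<longleftrightarrow> Int_consistent \<T> \<and>
     (\<exists>ord. strict_total_on \<T> ord \<and> SO \<subseteq> ord \<and>
        (\<forall>S\<in>\<T>. \<forall>x v. reads S x v \<longrightarrow>
           (\<exists>T. T \<in> WriteTx \<T> x \<and> (T, S) \<in> ord \<and>
                (\<forall>T'\<in>WriteTx \<T> x. (T', S) \<in> ord \<longrightarrow> T' = T \<or> (T', T) \<in> ord) \<and>
                writes T x v)))"

datatype 'k elabel = SOe | WRe 'k | WWe 'k | RWe 'k

type_synonym ('k, 'v) edge = "('k, 'v) txn \<times> 'k elabel \<times> ('k, 'v) txn"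

type_synonym ('k, 'v) hpolygraph =
  "('k, 'v) txn set \<times> ('k, 'v) edge set \<times> ('k, 'v) edge set set \<times> ('k, 'v) edge set set"

definition known_edges ::
  "('k, 'v) txn set \<Rightarrow> (('k, 'v) txn \<times> ('k, 'v) txn) set \<Rightarrow> ('k, 'v) edge set" where
  "known_edges \<T> SO =
     {(T, SOe, S) | T S. (T, S) \<in> SO} \<union>
     {(T, WRe x, S) | T S x. \<exists>v. S \<in> \<T> \<and> reads S x v \<and> T \<in> \<T> \<and> writes T x v \<and>
                           (\<forall>T'\<in>\<T>. writes T' x v \<longrightarrow> T' = T)}"

definition C_WW :: "('k, 'v) txn set \<Rightarrow> ('k, 'v) edge set set" where
  "C_WW \<T> = {{(T, WWe x, S), (S, WWe x, T)} | x T S.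
               T \<in> WriteTx \<T> x \<and> S \<in> WriteTx \<T> x \<and> T \<noteq> S}"

definition C_WR :: "('k, 'v) txn set \<Rightarrow> ('k, 'v) edge set set" where
  "C_WR \<T> = {{(Ti, WRe x, S) | Ti. Ti \<in> \<T> \<and> writes Ti x v} | S x v. S \<in> \<T> \<and> reads S x v}"

definition hyper_polygraph ::
  "('k, 'v) txn set \<Rightarrow> (('k, 'v) txn \<times> ('k, 'v) txn) set \<Rightarrow> ('k, 'v) hpolygraph" where
  "hyper_polygraph \<T> SO = (\<T>, known_edges \<T> SO, C_WW \<T>, C_WR \<T>)"

definition labeled_graph :: "('k, 'v) txn set \<Rightarrow> ('k, 'v) edge set \<Rightarrow> bool" where
  "labeled_graph V E \<longleftrightarrow> (\<forall>(a, l, b)\<in>E. a \<in> V \<and> b \<in> V)"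

definition compatible ::
  "('k, 'v) txn set \<Rightarrow> ('k, 'v) edge set \<Rightarrow> ('k, 'v) hpolygraph \<Rightarrow> bool" where
  "compatible V' E' G \<longleftrightarrow>
     (case G of (V, E, CWW, CWR) \<Rightarrow>
        V' = V \<and> E \<subseteq> E' \<and>
        (\<forall>x T T' S. T \<noteq> S \<longrightarrow> (T', WRe x, T) \<in> E' \<longrightarrow> (T', WWe x, S) \<in> E'
                     \<longrightarrow> (T, RWe x, S) \<in> E') \<and>
        (\<forall>C\<in>CWW \<union> CWR. \<exists>!e. e \<in> E' \<inter> C))"

definition acyclic_lg :: "('k, 'v) edge set \<Rightarrow> bool" where
  "acyclic_lg E \<longleftrightarrow> acyclic {(a, b). \<exists>l. (a, l, b) \<in> E}"

end

theory Submission imports Defs begin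
lemma linext:
  assumes "finite A"
  shows "\<forall>r. r \<subseteq> A \<times> A \<and> acyclic r \<longrightarrow> (\<exists>ord. strict_total_on A ord \<and> r \<subseteq> ord)"
  using assms
proof (induction A rule: finite_remove_induct)
  case empty
  then show ?case by (auto simp: strict_total_on_def irrefl_def trans_def)
next
  case (remove A)
  show ?case
  proof (intro allI impI, elim conjE)
    fix r assume rA: "r \<subseteq> A \<times> A" and ac: "acyclic r"
    have "finite r" using rA remove.hyps(1) finite_subset by blast
    then have "wf (r\<inverse>)" using ac finite_acyclic_wf_converse by blast
    then obtain m where m: "m \<in> A" "\<forall>y. (y, m) \<in> r\<inverse> \<longrightarrow> y \<notin> A"
      using remove.hyps(2) wfE_min by (metis ex_in_conv)
    have nosucc: "\<And>y. (m, y) \<notin> r" using m rA by blast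
    define r' where "r' = r \<inter> (A - {m}) \<times> (A - {m})"
    have "acyclic r'" unfolding r'_def using ac acyclic_subset by blast
    then obtain ord' where o': "strict_total_on (A - {m}) ord'" "r' \<subseteq> ord'"
      using remove.IH[OF m(1)] unfolding r'_def by blast
    define ord where "ord = ord' \<union> (A - {m}) \<times> {m}"
    have irr: "\<And>a. (a, a) \<notin> r" using ac by (meson acyclic_irrefl irrefl_def r_into_trancl)
    have "strict_total_on A ord"
      using o'(1) m(1) unfolding ord_def strict_total_on_def irrefl_def trans_def
      by blast
    moreover have "r \<subseteq> ord"
    proof
      fix p assume p: "p \<in> r"
      obtain a b where ab: "p = (a, b)" by (cases p)
      show "p \<in> ord"
      proof (cases "b = m")
        case True
        then show ?thesis using p ab irr rA unfolding ord_def by blast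
      next
        case False
        then have "a \<noteq> m" using nosucc p ab by blast
        then show ?thesis using False p ab rA o'(2) unfolding ord_def r'_def by blast
      qed
    qed
    ultimately show "\<exists>ord. strict_total_on A ord \<and> r \<subseteq> ord" by blast
  qed
qed

lemma sto_asym: "strict_total_on A r \<Longrightarrow> (a, b) \<in> r \<Longrightarrow> (b, a) \<notin> r"
  unfolding strict_total_on_def irrefl_def trans_def by blast

lemma forward:
  fixes \<T> :: "('k, 'v) txn set"
  assumes ser: "serializable \<T> SO"
  shows "\<exists>V' E'. labeled_graph V' E' \<and> acyclic_lg E' \<and>
                    compatible V' E' (hyper_polygraph \<T> SO)"
proof -
  obtain ord where sto: "strict_total_on \<T> ord" and so: "SO \<subseteq> ord" and
    rd: "\<forall>S\<in>\<T>. \<forall>x v. reads S x v \<longrightarrow>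
           (\<exists>T. T \<in> WriteTx \<T> x \<and> (T, S) \<in> ord \<and>
                (\<forall>T'\<in>WriteTx \<T> x. (T', S) \<in> ord \<longrightarrow> T' = T \<or> (T', T) \<in> ord) \<and>
                writes T x v)"
    using ser unfolding serializable_def by blast
  define islw where "islw x T S \<longleftrightarrow> T \<in> WriteTx \<T> x \<and> (T, S) \<in> ord \<and>
                (\<forall>T'\<in>WriteTx \<T> x. (T', S) \<in> ord \<longrightarrow> T' = T \<or> (T', T) \<in> ord)" for x T S
  have ordT: "ord \<subseteq> \<T> \<times> \<T>" using sto unfolding strict_total_on_def by blast
  have irr: "\<And>a. (a, a) \<notin> ord" using sto unfolding strict_total_on_def irrefl_def by blast
  have tr: "trans ord" using sto unfolding strict_total_on_def by blast
  have tot: "\<And>a b. a \<in> \<T> \<Longrightarrow> b \<in> \<T> \<Longrightarrow> a \<noteq> b \<Longrightarrow> (a, b) \<in> ord \<or> (b, a) \<in> ord"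
    using sto unfolding strict_total_on_def by blast
  have asy: "\<And>a b. (a, b) \<in> ord \<Longrightarrow> (b, a) \<notin> ord" using sto_asym[OF sto] by blast
  have uniq: "\<And>x T T2 S. islw x T S \<Longrightarrow> islw x T2 S \<Longrightarrow> T = T2"
    unfolding islw_def using asy by blast
  define EWR where "EWR = {(T, WRe x, S) | T S x. S \<in> \<T> \<and> (\<exists>v. reads S x v) \<and> islw x T S}"
  define EWW where "EWW = {(T, WWe x, S) | T S x. T \<in> WriteTx \<T> x \<and> S \<in> WriteTx \<T> x \<and> (T, S) \<in> ord}"
  define ERW where "ERW = {(T, RWe x, S) | T S x. \<exists>T'. T \<noteq> S \<and> (T', WRe x, T) \<in> EWR \<and> (T', WWe x, S) \<in> EWW}"
  define ESO :: "('k, 'v) edge set" where "ESO = {(T, SOe, S) | T S. (T, S) \<in> SO}"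
  define E' where "E' = ESO \<union> EWR \<union> EWW \<union> ERW"
  have rw_ord: "(T, S) \<in> ord" if rwin: "(T, RWe x, S) \<in> ERW" for T S x
  proof -
    obtain T' where h: "T \<noteq> S" "(T', WRe x, T) \<in> EWR" "(T', WWe x, S) \<in> EWW"
      using rwin unfolding ERW_def by blast
    have lw: "islw x T' T" and "T \<in> \<T>" using h(2) unfolding EWR_def by auto
    have S: "S \<in> WriteTx \<T> x" "(T', S) \<in> ord" using h(3) unfolding EWW_def by auto
    have "S \<in> \<T>" using S(1) unfolding WriteTx_def by blast
    show ?thesis
    proof (rule ccontr)
      assume "(T, S) \<notin> ord"
      then have "(S, T) \<in> ord" using tot[OF \<open>T \<in> \<T>\<close> \<open>S \<in> \<T>\<close> h(1)] by blast
      then have "S = T' \<or> (S, T') \<in> ord" using lw S(1) unfolding islw_def by blast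
      then show False using S(2) irr asy by blast
    qed
  qed
  have edges_ord: "{(a, b). \<exists>l. (a, l, b) \<in> E'} \<subseteq> ord"
  proof safe
    fix a l b assume "(a, l, b) \<in> E'"
    then consider "(a, l, b) \<in> ESO" | "(a, l, b) \<in> EWR" | "(a, l, b) \<in> EWW" | "(a, l, b) \<in> ERW"
      unfolding E'_def by blast
    then show "(a, b) \<in> ord"
    proof cases
      case 1 then show ?thesis using so unfolding ESO_def by blast
    next
      case 2 then show ?thesis unfolding EWR_def islw_def by blast
    next
      case 3 then show ?thesis unfolding EWW_def by blast
    next
      case 4 then show ?thesis using rw_ord unfolding ERW_def by blast
    qed
  qed
  have lg: "labeled_graph \<T> E'"
    unfolding labeled_graph_def using edges_ord ordT by blast
  have "acyclic ord" unfolding acyclic_def using tr irr by (simp add: trancl_id)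
  then have ac: "acyclic_lg E'" unfolding acyclic_lg_def using edges_ord acyclic_subset by blast
  have known: "known_edges \<T> SO \<subseteq> E'"
  proof
    fix e assume "e \<in> known_edges \<T> SO"
    then consider "e \<in> ESO" | T S x v where "e = (T, WRe x, S)" "S \<in> \<T>" "reads S x v" "T \<in> \<T>"
      "writes T x v" "\<forall>T'\<in>\<T>. writes T' x v \<longrightarrow> T' = T"
      unfolding known_edges_def ESO_def by blast
    then show "e \<in> E'"
    proof cases
      case 1 then show ?thesis unfolding E'_def by blast
    next
      case 2
      obtain T0 where "islw x T0 S" "writes T0 x v"
        using rd 2(2,3) unfolding islw_def by blast
      moreover have "T0 \<in> \<T>" using \<open>islw x T0 S\<close> unfolding islw_def WriteTx_def by blast
      ultimately have "T0 = T" using 2(6) by blast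
      then show ?thesis using 2 \<open>islw x T0 S\<close> unfolding E'_def EWR_def by blast
    qed
  qed
  have rwc: "\<forall>x T T' S. T \<noteq> S \<longrightarrow> (T', WRe x, T) \<in> E' \<longrightarrow> (T', WWe x, S) \<in> E'
                     \<longrightarrow> (T, RWe x, S) \<in> E'"
  proof (intro allI impI)
    fix x T T' S assume "T \<noteq> S" "(T', WRe x, T) \<in> E'" "(T', WWe x, S) \<in> E'"
    then have "(T', WRe x, T) \<in> EWR" "(T', WWe x, S) \<in> EWW"
      unfolding E'_def ESO_def ERW_def EWW_def EWR_def by auto
    then show "(T, RWe x, S) \<in> E'" using \<open>T \<noteq> S\<close> unfolding E'_def ERW_def by blast
  qed
  have cww: "\<exists>!e. e \<in> E' \<inter> C" if Cin: "C \<in> C_WW \<T>" for C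
  proof -
    obtain x T S where C: "C = {(T, WWe x, S), (S, WWe x, T)}" "T \<in> WriteTx \<T> x"
      "S \<in> WriteTx \<T> x" "T \<noteq> S"
      using Cin unfolding C_WW_def by blast
    have inE: "(A, WWe y, B) \<in> E' \<longleftrightarrow> (A, WWe y, B) \<in> EWW" for A B y
      unfolding E'_def ESO_def ERW_def EWR_def by auto
    have inEW: "(A, WWe y, B) \<in> E' \<longleftrightarrow> A \<in> WriteTx \<T> y \<and> B \<in> WriteTx \<T> y \<and> (A, B) \<in> ord" for A B y
      unfolding inE EWW_def by blast
    have "T \<in> \<T>" "S \<in> \<T>" using C unfolding WriteTx_def by auto
    then have "(T, S) \<in> ord \<or> (S, T) \<in> ord" using tot C(4) by blast
    moreover have "\<not> ((T, S) \<in> ord \<and> (S, T) \<in> ord)" using asy by blast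
    ultimately consider "(T, S) \<in> ord" "(S, T) \<notin> ord" | "(S, T) \<in> ord" "(T, S) \<notin> ord" by blast
    then show ?thesis
    proof cases
      case 1
      have "(T, WWe x, S) \<in> E'" "(S, WWe x, T) \<notin> E'" by (simp_all add: inEW C(2,3) 1)
      then show ?thesis unfolding C(1) by blast
    next
      case 2
      have "(S, WWe x, T) \<in> E'" "(T, WWe x, S) \<notin> E'" by (simp_all add: inEW C(2,3) 2)
      then show ?thesis unfolding C(1) by blast
    qed
  qed
  have cwr: "\<exists>!e. e \<in> E' \<inter> C" if Cin: "C \<in> C_WR \<T>" for C
  proof -
    obtain S x v where C: "C = {(Ti, WRe x, S) | Ti. Ti \<in> \<T> \<and> writes Ti x v}" "S \<in> \<T>" "reads S x v"
      using Cin unfolding C_WR_def by blast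
    have inE: "(A, WRe y, B) \<in> E' \<longleftrightarrow> (A, WRe y, B) \<in> EWR" for A B y
      unfolding E'_def ESO_def ERW_def EWW_def by auto
    obtain T0 where T0: "islw x T0 S" "writes T0 x v"
      using rd C(2,3) unfolding islw_def by blast
    have "T0 \<in> \<T>" using T0 unfolding islw_def WriteTx_def by blast
    have "(T0, WRe x, S) \<in> E' \<inter> C" using T0 \<open>T0 \<in> \<T>\<close> C inE unfolding EWR_def by blast
    moreover have "e = (T0, WRe x, S)" if ein: "e \<in> E' \<inter> C" for e
    proof -
      obtain Ti where e: "e = (Ti, WRe x, S)" using ein C(1) by blast
      then have "islw x Ti S" using ein inE unfolding EWR_def by blast
      then show ?thesis using e uniq T0(1) by blast
    qed
    ultimately show ?thesis by blast
  qed
  have "compatible \<T> E' (hyper_polygraph \<T> SO)"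
  proof -
    have "\<forall>C\<in>C_WW \<T> \<union> C_WR \<T>. \<exists>!e. e \<in> E' \<inter> C" using cww cwr by blast
    then show ?thesis unfolding compatible_def hyper_polygraph_def prod.case using known rwc by blast
  qed
  then show ?thesis using lg ac by blast
qed


lemma backward:
  fixes \<T> :: "('k, 'v) txn set"
  assumes fin: "finite \<T>" and int: "Int_consistent \<T>"
    and lg: "labeled_graph V' E'" and ac: "acyclic_lg E'"
    and comp: "compatible V' E' (hyper_polygraph \<T> SO)"
  shows "serializable \<T> SO"
proof -
  have c: "V' = \<T> \<and> known_edges \<T> SO \<subseteq> E' \<and>
    (\<forall>x T T' S. T \<noteq> S \<longrightarrow> (T', WRe x, T) \<in> E' \<longrightarrow> (T', WWe x, S) \<in> E'
                     \<longrightarrow> (T, RWe x, S) \<in> E') \<and>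
    (\<forall>C\<in>C_WW \<T> \<union> C_WR \<T>. \<exists>!e. e \<in> E' \<inter> C)"
    using comp unfolding compatible_def hyper_polygraph_def prod.case .
  note V = conjunct1[OF c]
  note known = conjunct1[OF conjunct2[OF c]]
  note rwc = conjunct1[OF conjunct2[OF conjunct2[OF c]]]
  note cs = conjunct2[OF conjunct2[OF conjunct2[OF c]]]
  define r where "r = {(a, b). \<exists>l. (a, l, b) \<in> E'}"
  have rT: "r \<subseteq> \<T> \<times> \<T>" using lg V unfolding labeled_graph_def r_def by blast
  have "acyclic r" using ac unfolding acyclic_lg_def r_def by simp
  then obtain ord where sto: "strict_total_on \<T> ord" and rord: "r \<subseteq> ord"
    using linext[OF fin] rT by blast
  have asy: "\<And>a b. (a, b) \<in> ord \<Longrightarrow> (b, a) \<notin> ord" using sto_asym[OF sto] by blast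
  have irr: "\<And>a. (a, a) \<notin> ord" using sto unfolding strict_total_on_def irrefl_def by blast
  have eo: "\<And>a l b. (a, l, b) \<in> E' \<Longrightarrow> (a, b) \<in> ord" using rord unfolding r_def by blast
  have soab: "(a, b) \<in> ord" if ab: "(a, b) \<in> SO" for a b
  proof -
    have "(a, SOe, b) \<in> known_edges \<T> SO" unfolding known_edges_def using ab by blast
    then show ?thesis using known eo by blast
  qed
  have so: "SO \<subseteq> ord" using soab by auto
  have rd: "\<forall>S\<in>\<T>. \<forall>x v. reads S x v \<longrightarrow>
           (\<exists>T. T \<in> WriteTx \<T> x \<and> (T, S) \<in> ord \<and>
                (\<forall>T'\<in>WriteTx \<T> x. (T', S) \<in> ord \<longrightarrow> T' = T \<or> (T', T) \<in> ord) \<and>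
                writes T x v)"
  proof (intro ballI allI impI)
    fix S x v assume S: "S \<in> \<T>" and rv: "reads S x v"
    define C where "C = {(Ti, WRe x, S) | Ti. Ti \<in> \<T> \<and> writes Ti x v}"
    have "C \<in> C_WR \<T>" unfolding C_WR_def C_def using S rv by blast
    then obtain e where "e \<in> E' \<inter> C" using cs by blast
    then obtain T where T: "(T, WRe x, S) \<in> E'" "T \<in> \<T>" "writes T x v"
      unfolding C_def by blast
    have TW: "T \<in> WriteTx \<T> x" using T unfolding WriteTx_def by blast
    have TS: "(T, S) \<in> ord" using eo T(1) by blast
    have "T' = T \<or> (T', T) \<in> ord" if T': "T' \<in> WriteTx \<T> x" "(T', S) \<in> ord" for T'
    proof (rule ccontr)
      assume nn: "\<not> (T' = T \<or> (T', T) \<in> ord)"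
      define D where "D = {(T, WWe x, T'), (T', WWe x, T)}"
      have "D \<in> C_WW \<T>" unfolding C_WW_def D_def using TW T' nn by blast
      then obtain d where d: "d \<in> E' \<inter> D" using cs by blast
      show False
      proof (cases "d = (T', WWe x, T)")
        case True
        then show ?thesis using d eo nn by blast
      next
        case False
        then have "(T, WWe x, T') \<in> E'" using d unfolding D_def by blast
        moreover have "S \<noteq> T'" using T'(2) irr by blast
        ultimately have "(S, RWe x, T') \<in> E'" using rwc T(1) by blast
        then show False using eo T'(2) asy by blast
      qed
    qed
    then show "\<exists>T. T \<in> WriteTx \<T> x \<and> (T, S) \<in> ord \<and>
                (\<forall>T'\<in>WriteTx \<T> x. (T', S) \<in> ord \<longrightarrow> T' = T \<or> (T', T) \<in> ord) \<and>
                writes T x v" using TW TS T(3) by blast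
  qed
  show ?thesis unfolding serializable_def using int sto so rd by blast
qed

theorem theorem3p5:
  fixes \<T> :: "('k, 'v) txn set"
    and SO :: "(('k, 'v) txn \<times> ('k, 'v) txn) set"
    and Tb :: "('k, 'v) txn"
  assumes "is_history \<T> SO Tb"
  shows "serializable \<T> SO \<longleftrightarrow>
           Int_consistent \<T> \<and>
           (\<exists>V' E'. labeled_graph V' E' \<and> acyclic_lg E' \<and>
                    compatible V' E' (hyper_polygraph \<T> SO))"
proof
  assume ser: "serializable \<T> SO"
  have "Int_consistent \<T>" using ser unfolding serializable_def by (rule conjunct1)
  then show "Int_consistent \<T> \<and>
           (\<exists>V' E'. labeled_graph V' E' \<and> acyclic_lg E' \<and>
                    compatible V' E' (hyper_polygraph \<T> SO))"
    using forward[OF ser] by (rule conjI)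
next
  assume h: "Int_consistent \<T> \<and>
           (\<exists>V' E'. labeled_graph V' E' \<and> acyclic_lg E' \<and>
                    compatible V' E' (hyper_polygraph \<T> SO))"
  have "finite \<T>" using assms unfolding is_history_def by blast
  then show "serializable \<T> SO" using h backward by metis
qed

end
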